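(* Let $n\ge3$, let $(f,\Gamma)$ satisfy the standing structural assumptions, let $R>0$ and $x_0\in\mathbb R^n$. Then $u^{(in)}_{R,x_0}$ is the unique continuous viscosity solution of $f(\lambda(-A^u))=1$, $u>0$ in $B_R(x_0)$, with $u(x)\to+\infty$ as $\mathrm{dist}(x,\partial B_R(x_0))\to0$.
   Context: Let $n\ge3$. For a positive $C^2$ function $u$, its conformal Hessian is $A^u=-\frac{2}{n-2}u^{-\frac{n+2}{n-2}}\nabla^2u+\frac{2n}{(n-2)^2}u^{-\frac{2n}{n-2}}\nabla u\otimes\nabla u-\frac{2}{(n-2)^2}u^{-\frac{2n}{n-2}}|\nabla u|^2I$, and $\lambda(-A^u)$ is the vector of eigenvalues of $-A^u$. Let $\Gamma_n=\{\mu:\mu_i>0\ \forall i\}$. Standing structural assumptions on $(f,\Gamma)$: $\Gamma\subset\mathbb R^n$ is an open symmetric cone with vertex at the origin, $\Gamma+\Gamma_n\subset\Gamma$; $f\in C^0(\bar\Gamma)$ symmetric, $f>0$ in $\Gamma$, $f=0$ on $\partial\Gamma$, $f(\lambda+\mu)\ge f(\lambda)$ for $\lambda\in\Gamma,\mu\in\Gamma_n$, $f$ homogeneous of some positive degree. Viscosity solutions: sub-solutions $u\in USC$ satisfy $f(\lambda(-A^\varphi(x_0)))\ge1$ for every $C^2$ $\varphi$ touching $u$ from above at $x_0$; super-solutions $u\in LSC$ satisfy either $\lambda(-A^\varphi(x_0))\notin\bar\Gamma$ or $f(\lambda(-A^\varphi(x_0)))\le1$ for every $C^2$ $\varphi$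 touching from below; solutions are continuous functions that are both. Canonical solutions: there is a unique constant $\alpha=\alpha(f)>0$ such that for all $R>0$, $x_0\in\mathbb R^n$ the functions $u^{(in)}_{R,x_0}(x)=\alpha\big(\frac{R}{R^2-|x-x_0|^2}\big)^{\frac{n-2}{2}}$ and $u^{(out)}_{R,x_0}(x)=\alpha\big(\frac{R}{|x-x_0|^2-R^2}\big)^{\frac{n-2}{2}}$ satisfy $f(\lambda(-A^{u}))=1$ in $B_R(x_0)$ and in $\mathbb R^n\setminus\bar B_R(x_0)$ respectively (the eigenvalue vectors being constant). *)

theory Defs
  imports "HOL-Analysis.Analysis"
begin

text \<open>Points of R^n are vectors of type real^'n; the dimension is n = CARD('n).\<close>

definition grad :: "(real^'n::finite \<Rightarrow> real) \<Rightarrow> real^'n \<Rightarrow> real^'n" where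
  "grad u x = (\<chi> i. frechet_derivative u (at x) (axis i 1))"

definition hess :: "(real^'n::finite \<Rightarrow> real) \<Rightarrow> real^'n \<Rightarrow> real^'n^'n" where
  "hess u x = matrix (frechet_derivative (grad u) (at x))"

definition C2_on :: "(real^'n::finite \<Rightarrow> real) \<Rightarrow> (real^'n) set \<Rightarrow> bool" where
  "C2_on u S \<longleftrightarrow> open S \<and>
     (\<exists>Du H. (\<forall>x\<in>S. (u has_derivative (\<lambda>h. Du x \<bullet> h)) (at x) \<and>
                      (Du has_derivative (\<lambda>h. H x *v h)) (at x)) \<and> continuous_on S H)"

definition conf_hess :: "(real^'n::finite \<Rightarrow> real) \<Rightarrow> real^'n \<Rightarrow> real^'n^'n" where
  "conf_hess u x =
     (let n = real CARD('n); g = grad u x; c = u x in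
        (- (2 / (n - 2)) * c powr (- (n + 2) / (n - 2))) *\<^sub>R hess u x
      + ((2 * n / (n - 2)^2) * c powr (- 2 * n / (n - 2))) *\<^sub>R (\<chi> i j. g $ i * g $ j)
      - ((2 / (n - 2)^2) * c powr (- 2 * n / (n - 2)) * (norm g)^2) *\<^sub>R mat 1)"

definition diag_mat :: "real^'n::finite \<Rightarrow> real^'n^'n" where
  "diag_mat lam = (\<chi> i j. if i = j then lam $ i else 0)"

definition eigvals :: "real^'n::finite^'n \<Rightarrow> real^'n \<Rightarrow> bool" where
  "eigvals M lam \<longleftrightarrow> (\<exists>Q. orthogonal_matrix Q \<and> M = transpose Q ** diag_mat lam ** Q)"

definition posCone :: "(real^'n::finite) set" where
  "posCone = {mu. \<forall>i. mu $ i > 0}"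

definition structural :: "(real^'n::finite \<Rightarrow> real) \<Rightarrow> (real^'n) set \<Rightarrow> bool" where
  "structural f \<Gamma> \<longleftrightarrow>
     open \<Gamma> \<and> \<Gamma> \<noteq> {} \<and>
     (\<forall>t>0. \<forall>lam\<in>\<Gamma>. t *\<^sub>R lam \<in> \<Gamma>) \<and>
     (\<forall>p lam. p permutes (UNIV::'n set) \<and> lam \<in> \<Gamma> \<longrightarrow> (\<chi> i. lam $ p i) \<in> \<Gamma>) \<and>
     (\<forall>lam\<in>\<Gamma>. \<forall>mu\<in>posCone. lam + mu \<in> \<Gamma>) \<and>
     continuous_on (closure \<Gamma>) f \<and>
     (\<forall>p lam. p permutes (UNIV::'n set) \<and> lam \<in> closure \<Gamma> \<longrightarrow> f (\<chi> i. lam $ p i) = f lam) \<and>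
     (\<forall>lam\<in>\<Gamma>. f lam > 0) \<and>
     (\<forall>lam\<in>frontier \<Gamma>. f lam = 0) \<and>
     (\<forall>lam\<in>\<Gamma>. \<forall>mu\<in>posCone. f (lam + mu) \<ge> f lam) \<and>
     (\<exists>k>0. \<forall>lam\<in>closure \<Gamma>. \<forall>t>0. f (t *\<^sub>R lam) = t powr k * f lam)"

text \<open>Pointwise conditions on the matrix -A (f only defined on closure of Gamma).\<close>
definition sub_cond :: "(real^'n::finite \<Rightarrow> real) \<Rightarrow> (real^'n) set \<Rightarrow> real^'n^'n \<Rightarrow> bool" where
  "sub_cond f \<Gamma> M \<longleftrightarrow> (\<forall>lam. eigvals M lam \<longrightarrow> lam \<in> closure \<Gamma> \<and> f lam \<ge> 1)"

definition super_cond :: "(real^'n::finite \<Rightarrow> real) \<Rightarrow> (real^'n) set \<Rightarrow> real^'n^'n \<Rightarrow> bool" where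
  "super_cond f \<Gamma> M \<longleftrightarrow> (\<forall>lam. eigvals M lam \<longrightarrow> lam \<notin> closure \<Gamma> \<or> f lam \<le> 1)"

definition eq_cond :: "(real^'n::finite \<Rightarrow> real) \<Rightarrow> (real^'n) set \<Rightarrow> real^'n^'n \<Rightarrow> bool" where
  "eq_cond f \<Gamma> M \<longleftrightarrow> (\<forall>lam. eigvals M lam \<longrightarrow> lam \<in> closure \<Gamma> \<and> f lam = 1)"

definition usc_on :: "(real^'n::finite) set \<Rightarrow> (real^'n \<Rightarrow> real) \<Rightarrow> bool" where
  "usc_on S u \<longleftrightarrow> (\<forall>x\<in>S. \<forall>e>0. \<exists>d>0. \<forall>y\<in>S. dist y x < d \<longrightarrow> u y < u x + e)"

definition lsc_on :: "(real^'n::finite) set \<Rightarrow> (real^'n \<Rightarrow> real) \<Rightarrow> bool" where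
  "lsc_on S u \<longleftrightarrow> (\<forall>x\<in>S. \<forall>e>0. \<exists>d>0. \<forall>y\<in>S. dist y x < d \<longrightarrow> u y > u x - e)"

definition visc_sub :: "(real^'n::finite \<Rightarrow> real) \<Rightarrow> (real^'n) set \<Rightarrow> (real^'n) set \<Rightarrow> (real^'n \<Rightarrow> real) \<Rightarrow> bool" where
  "visc_sub f \<Gamma> \<Omega> u \<longleftrightarrow> usc_on \<Omega> u \<and>
     (\<forall>x0\<in>\<Omega>. \<forall>\<phi> U. open U \<and> x0 \<in> U \<and> U \<subseteq> \<Omega> \<and> C2_on \<phi> U \<and> \<phi> x0 = u x0 \<and>
        (\<forall>x\<in>U. u x \<le> \<phi> x) \<longrightarrow> sub_cond f \<Gamma> (- conf_hess \<phi> x0))"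

definition visc_super :: "(real^'n::finite \<Rightarrow> real) \<Rightarrow> (real^'n) set \<Rightarrow> (real^'n) set \<Rightarrow> (real^'n \<Rightarrow> real) \<Rightarrow> bool" where
  "visc_super f \<Gamma> \<Omega> u \<longleftrightarrow> lsc_on \<Omega> u \<and>
     (\<forall>x0\<in>\<Omega>. \<forall>\<phi> U. open U \<and> x0 \<in> U \<and> U \<subseteq> \<Omega> \<and> C2_on \<phi> U \<and> \<phi> x0 = u x0 \<and>
        (\<forall>x\<in>U. \<phi> x \<le> u x) \<longrightarrow> super_cond f \<Gamma> (- conf_hess \<phi> x0))"

definition visc_sol :: "(real^'n::finite \<Rightarrow> real) \<Rightarrow> (real^'n) set \<Rightarrow> (real^'n) set \<Rightarrow> (real^'n \<Rightarrow> real) \<Rightarrow> bool" where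
  "visc_sol f \<Gamma> \<Omega> u \<longleftrightarrow> continuous_on \<Omega> u \<and> visc_sub f \<Gamma> \<Omega> u \<and> visc_super f \<Gamma> \<Omega> u"

definition u_in :: "real \<Rightarrow> real \<Rightarrow> real^'n::finite \<Rightarrow> real^'n \<Rightarrow> real" where
  "u_in a R x0 x = a * (R / (R^2 - (dist x x0)^2)) powr ((real CARD('n) - 2) / 2)"

definition u_out :: "real \<Rightarrow> real \<Rightarrow> real^'n::finite \<Rightarrow> real^'n \<Rightarrow> real" where
  "u_out a R x0 x = a * (R / ((dist x x0)^2 - R^2)) powr ((real CARD('n) - 2) / 2)"

text \<open>a is the constant alpha(f): u_in, u_out solve the equation classically for all R, x0.\<close>
definition canonical_const :: "(real^'n::finite \<Rightarrow> real) \<Rightarrow> (real^'n) set \<Rightarrow> real \<Rightarrow> bool" where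
  "canonical_const f \<Gamma> a \<longleftrightarrow> a > 0 \<and>
     (\<forall>R>0. \<forall>x0::real^'n.
        C2_on (u_in a R x0) (ball x0 R) \<and>
        (\<forall>x\<in>ball x0 R. eq_cond f \<Gamma> (- conf_hess (u_in a R x0) x)) \<and>
        C2_on (u_out a R x0) (- cball x0 R) \<and>
        (\<forall>x\<in>- cball x0 R. eq_cond f \<Gamma> (- conf_hess (u_out a R x0) x)))"

definition blowup_sol :: "(real^'n::finite \<Rightarrow> real) \<Rightarrow> (real^'n) set \<Rightarrow> real \<Rightarrow> real^'n \<Rightarrow> (real^'n \<Rightarrow> real) \<Rightarrow> bool" where
  "blowup_sol f \<Gamma> R x0 u \<longleftrightarrow>
     visc_sol f \<Gamma> (ball x0 R) u \<and> (\<forall>x\<in>ball x0 R. u x > 0) \<and>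
     (\<forall>M. \<exists>d>0. \<forall>x\<in>ball x0 R. infdist x (sphere x0 R) < d \<longrightarrow> u x > M)"

end

theory Submission
  imports Defs
begin



lemma outer_mult: fixes e h :: "real^'n::finite"
  shows "(\<chi> i j. e$i * e$j) *v h = (e \<bullet> h) *\<^sub>R e"
  by (simp add: vec_eq_iff matrix_vector_mult_def inner_vec_def sum_distrib_left algebra_simps)

lemma scaleR_mv: fixes A :: "real^'n::finite^'m::finite"
  shows "(c *\<^sub>R A) *v h = c *\<^sub>R (A *v h)"
  by (simp add: vec_eq_iff matrix_vector_mult_def sum_distrib_left algebra_simps)

definition Qf :: "real \<Rightarrow> real^'n::finite \<Rightarrow> real^'n \<Rightarrow> real" where
  "Qf R x0 y = R / (R^2 - (y - x0) \<bullet> (y - x0))"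

lemma D_pos: "x \<in> ball x0 R \<Longrightarrow> R^2 - (x - x0) \<bullet> (x - x0) > 0"
proof -
  assume "x \<in> ball x0 R"
  then have "norm (x - x0) < R" by (simp add: dist_norm norm_minus_commute)
  moreover have "norm (x-x0) \<ge> 0" by simp
  ultimately have "norm (x-x0)^2 < R^2" by (simp add: power_strict_mono)
  thus ?thesis by (simp add: power2_norm_eq_inner)
qed

lemma Q_pos: "R > 0 \<Longrightarrow> x \<in> ball x0 R \<Longrightarrow> Qf R x0 x > 0"
  using D_pos[of x x0 R] by (simp add: Qf_def)

lemma u_in_Q: "x \<in> ball x0 R \<Longrightarrow> u_in b R x0 x = b * Qf R x0 x powr ((real CARD('n) - 2)/2)"
  for x :: "real^'n::finite"
  by (simp add: u_in_def Qf_def dist_norm power2_norm_eq_inner)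

lemma deriv_Q: fixes x0 :: "real^'n::finite"
  assumes "R > 0" "x \<in> ball x0 R"
  shows "(Qf R x0 has_derivative (\<lambda>h. (2/R) * Qf R x0 x ^ 2 * ((x - x0) \<bullet> h))) (at x)"
proof -
  have D: "R^2 - (x - x0) \<bullet> (x - x0) \<noteq> 0" using D_pos[OF assms(2)] by simp
  have "((\<lambda>y. R / (R^2 - (y - x0) \<bullet> (y - x0))) has_derivative (\<lambda>h. (2/R) * Qf R x0 x ^ 2 * ((x - x0) \<bullet> h))) (at x)"
    apply (rule derivative_eq_intros refl D)+
    using D assms(1) by (auto simp: Qf_def field_simps inner_commute power2_eq_square)
  thus ?thesis unfolding Qf_def[abs_def] .
qed

lemma deriv_Qpow: fixes x0 :: "real^'n::finite"
  assumes "R > 0" "x \<in> ball x0 R"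
  shows "((\<lambda>y. Qf R x0 y powr r) has_derivative (\<lambda>h. (2*r/R) * Qf R x0 x powr (r+1) * ((x - x0) \<bullet> h))) (at x)"
proof -
  have Q: "Qf R x0 x > 0" using Q_pos assms by blast
  have e: "Qf R x0 x powr (r+1) = Qf R x0 x powr r * Qf R x0 x"
    using Q by (simp add: powr_add)
  have e2: "Qf R x0 x powr (1+r) = Qf R x0 x powr r * Qf R x0 x"
    using Q by (simp add: powr_add)
  show ?thesis
    apply (rule has_derivative_eq_rhs)
     apply (rule has_derivative_powr[OF deriv_Q[OF assms] has_derivative_const Q])
     apply simp
    using Q by (auto simp: e e2 field_simps power2_eq_square)
qed

definition Duf :: "real \<Rightarrow> real \<Rightarrow> real^'n::finite \<Rightarrow> real^'n \<Rightarrow> real^'n" where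
  "Duf b R x0 y = (b * (2 * ((real CARD('n) - 2)/2) / R) * Qf R x0 y powr ((real CARD('n) - 2)/2 + 1)) *\<^sub>R (y - x0)"

definition Hf :: "real \<Rightarrow> real \<Rightarrow> real^'n::finite \<Rightarrow> real^'n \<Rightarrow> real^'n^'n" where
  "Hf b R x0 y = (let p = (real CARD('n) - 2)/2 in
     (b * (2*p/R) * (2*(p+1)/R) * Qf R x0 y powr (p+2)) *\<^sub>R (\<chi> i j. (y-x0)$i * (y-x0)$j)
     + (b * (2 * p / R) * Qf R x0 y powr (p + 1)) *\<^sub>R mat 1)"

lemma deriv_u: fixes x0 :: "real^'n::finite"
  assumes "R > 0" "x \<in> ball x0 R"
  shows "((\<lambda>y. b * Qf R x0 y powr ((real CARD('n) - 2)/2)) has_derivative (\<lambda>h. Duf b R x0 x \<bullet> h)) (at x)"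
  apply (rule has_derivative_eq_rhs)
   apply (rule has_derivative_mult_right)
   apply (rule deriv_Qpow[OF assms])
  by (auto simp: Duf_def)

lemma deriv_Du: fixes x0 :: "real^'n::finite"
  assumes "R > 0" "x \<in> ball x0 R"
  shows "(Duf b R x0 has_derivative (\<lambda>h. Hf b R x0 x *v h)) (at x)"
proof -
  define p where "p = (real CARD('n) - 2)/2"
  have "((\<lambda>y. (b * (2 * p / R) * Qf R x0 y powr (p + 1)) *\<^sub>R (y - x0)) has_derivative (\<lambda>h. Hf b R x0 x *v h)) (at x)"
    apply (rule has_derivative_eq_rhs)
     apply (rule has_derivative_scaleR)
      apply (rule has_derivative_mult_right)
      apply (rule deriv_Qpow[OF assms])
     apply (rule derivative_eq_intros refl)+
    apply (rule ext)
    apply (simp only: Hf_def p_def[symmetric] Let_def matrix_vector_mult_add_rdistrib scaleR_mv outer_mult matrix_vector_mul_lid)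
    using assms(1) apply (simp add: vec_eq_iff field_simps)
    done
  thus ?thesis unfolding Duf_def[abs_def] p_def .
qed

lemma grad_hess_eq:
  fixes u :: "real^'n::finite \<Rightarrow> real"
  assumes S: "open S" "x \<in> S"
    and du: "\<And>y. y \<in> S \<Longrightarrow> (u has_derivative (\<lambda>h. Du y \<bullet> h)) (at y)"
    and dH: "(Du has_derivative (\<lambda>h. H *v h)) (at x)"
  shows "grad u x = Du x" "hess u x = H"
proof -
  have g: "grad u y = Du y" if "y \<in> S" for y
  proof -
    have "frechet_derivative u (at y) = (\<lambda>h. Du y \<bullet> h)"
      using frechet_derivative_at[OF du[OF that]] by simp
    thus ?thesis by (simp add: grad_def vec_eq_iff inner_axis)
  qed
  show "grad u x = Du x" using g S by blast
  have "(grad u has_derivative (\<lambda>h. H *v h)) (at x)"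
    by (rule has_derivative_transform_within_open[OF dH S]) (simp add: g)
  hence "frechet_derivative (grad u) (at x) = (\<lambda>h. H *v h)"
    using frechet_derivative_at by metis
  thus "hess u x = H" by (simp add: hess_def)
qed

lemma u_in_derivs:
  fixes x0 :: "real^'n::finite"
  assumes "R > 0" "x \<in> ball x0 R"
  shows "grad (u_in b R x0) x = Duf b R x0 x" "hess (u_in b R x0) x = Hf b R x0 x"
proof -
  have du: "(u_in b R x0 has_derivative (\<lambda>h. Duf b R x0 y \<bullet> h)) (at y)" if "y \<in> ball x0 R" for y
    by (rule has_derivative_transform_within_open[OF deriv_u[OF assms(1) that] open_ball that])
       (simp add: u_in_Q)
  show "grad (u_in b R x0) x = Duf b R x0 x" "hess (u_in b R x0) x = Hf b R x0 x"
    using grad_hess_eq[OF open_ball assms(2) du deriv_Du[OF assms]] by auto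
qed

definition tval :: "real \<Rightarrow> nat \<Rightarrow> real" where
  "tval b N = 2 * b powr (-4 / (real N - 2))"

lemma conf_u_in:
  fixes x0 :: "real^'n::finite"
  assumes "R > 0" "x \<in> ball x0 R" "b > 0" "CARD('n) \<ge> 3"
  shows "- conf_hess (u_in b R x0) x = tval b CARD('n) *\<^sub>R mat 1"
proof -
  define N where "N = real CARD('n)"
  define p where "p = (N - 2)/2"
  define Q where "Q = Qf R x0 x"
  define e where "e = x - x0"
  define s where "s = e \<bullet> e"
  define W where "W = Q powr (p+1)"
  define B2 where "B2 = b powr (- 2 * N / (N - 2))"
  have N3: "N \<ge> 3" using assms(4) by (simp add: N_def)
  have p0: "p > 0" using N3 by (simp add: p_def)
  have Np: "N = 2*p+2" by (simp add: p_def field_simps)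
  have Dp: "R^2 - s > 0" using D_pos[OF assms(2)] by (simp add: s_def e_def)
  have Qd: "Q = R / (R^2 - s)" by (simp add: Q_def Qf_def s_def e_def)
  have Q0: "Q > 0" using Q_pos[OF assms(1,2)] by (simp add: Q_def)
  have W0: "W > 0" using Q0 by (simp add: W_def)
  have B20: "B2 > 0" using assms(3) by (simp add: B2_def)
  have Wp2: "Q powr (p+2) = W * Q"
  proof -
    have "Q powr (p+2) = Q powr ((p+1) + 1)" by (simp add: add.assoc)
    also have "\<dots> = W * Q" using Q0 by (simp only: powr_add W_def powr_one_gt_zero_iff) simp
    finally show ?thesis .
  qed
  have u: "u_in b R x0 x = b * Q powr p" using u_in_Q[OF assms(2)] by (simp add: Q_def N_def p_def)
  have e1: "(b * Q powr p) powr (- (N + 2) / (N - 2)) = B2 * b / (W * Q)"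
  proof -
    have "(b * Q powr p) powr (- (N + 2) / (N - 2)) = b powr (- (N + 2) / (N - 2)) * Q powr (p * (- (N + 2) / (N - 2)))"
      using assms(3) Q0 by (simp add: powr_mult powr_powr)
    also have "b powr (- (N + 2) / (N - 2)) = b powr (- 2 * N / (N - 2) + 1)"
      using N3 by (rule_tac arg_cong[where f="\<lambda>z. b powr z"]) (simp add: field_simps)
    also have "\<dots> = B2 * b" using assms(3) unfolding B2_def by (subst powr_add) simp
    also have "p * (- (N + 2) / (N - 2)) = - (p + 2)" using N3 by (simp add: p_def field_simps)
    also have "Q powr (- (p+2)) = 1 / (W * Q)" by (subst powr_minus, subst Wp2) (simp add: field_simps)
    finally show ?thesis by simp
  qed
  have e2: "(b * Q powr p) powr (- 2 * N / (N - 2)) = B2 / W^2"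
  proof -
    have "(b * Q powr p) powr (- 2 * N / (N - 2)) = B2 * Q powr (p * (- 2 * N / (N - 2)))"
      using assms(3) Q0 by (simp add: powr_mult powr_powr B2_def)
    also have "p * (- 2 * N / (N - 2)) = - (2 * (p + 1))" using N3 by (simp add: p_def field_simps)
    also have "Q powr (- (2 * (p + 1))) = 1 / W^2"
    proof -
      have "Q powr (2 * (p + 1)) = W^2" using Q0 unfolding W_def
        by (subst powr_realpow[symmetric]) (auto simp: powr_powr mult.commute)
      thus ?thesis by (subst powr_minus) (simp add: field_simps)
    qed
    finally show ?thesis by simp
  qed
  have tv: "tval b CARD('n) = 2 * B2 * b^2"
  proof -
    have "b powr (-4 / (N - 2)) = b powr (- 2 * N / (N - 2) + 2)"
      using N3 by (rule_tac arg_cong[where f="\<lambda>z. b powr z"]) (simp add: field_simps)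
    also have "\<dots> = B2 * b^2" using assms(3) unfolding B2_def
      by (subst powr_add) (simp add: powr_numeral)
    finally show ?thesis by (simp add: tval_def N_def)
  qed
  define \<gamma> where "\<gamma> = b * (2 * p / R) * W"
  define \<alpha> where "\<alpha> = b * (2*p/R) * (2*(p+1)/R) * (W * Q)"
  define Om where "Om = (\<chi> i j. e$i * e$j :: real^'n^'n)"
  have g: "grad (u_in b R x0) x = \<gamma> *\<^sub>R e"
    using u_in_derivs[OF assms(1,2)] by (simp add: Duf_def \<gamma>_def W_def Q_def e_def N_def p_def)
  have h: "hess (u_in b R x0) x = \<alpha> *\<^sub>R Om + \<gamma> *\<^sub>R mat 1"
    using u_in_derivs[OF assms(1,2)] Wp2
    by (simp add: Hf_def Let_def \<gamma>_def \<alpha>_def W_def Q_def e_def N_def p_def Om_def)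
  have gg: "(\<chi> i j. (\<gamma> *\<^sub>R e) $ i * (\<gamma> *\<^sub>R e) $ j) = \<gamma>^2 *\<^sub>R Om"
    by (simp add: Om_def vec_eq_iff power2_eq_square)
  have ng: "(norm (\<gamma> *\<^sub>R e))^2 = \<gamma>^2 * s"
    by (simp only: power2_norm_eq_inner inner_scaleR_left inner_scaleR_right) (simp add: s_def power2_eq_square)
  define C1 where "C1 = - (2 / (N - 2)) * (B2 * b / (W * Q))"
  define C2 where "C2 = (2 * N / (N - 2)^2) * (B2 / W^2)"
  define C3 where "C3 = (2 / (N - 2)^2) * (B2 / W^2)"
  have ch: "conf_hess (u_in b R x0) x = C1 *\<^sub>R (\<alpha> *\<^sub>R Om + \<gamma> *\<^sub>R mat 1) + (C2 * \<gamma>^2) *\<^sub>R Om - (C3 * \<gamma>^2 * s) *\<^sub>R mat 1"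
    unfolding conf_hess_def Let_def g h gg ng u N_def[symmetric] e1 e2 C1_def C2_def C3_def
    by (simp add: scaleR_scaleR mult.assoc)
  have K1: "C1 * \<alpha> + C2 * \<gamma>^2 = 0"
    unfolding C1_def C2_def \<alpha>_def \<gamma>_def Np using p0 W0 Q0 assms(1)
    by (simp add: field_simps power2_eq_square)
  have K2: "C1 * \<gamma> - C3 * \<gamma>^2 * s = - tval b CARD('n)"
    unfolding tv C1_def C3_def \<gamma>_def Np using p0 W0 Q0 assms(1) Dp
    by (simp add: Qd field_simps power2_eq_square)
  have "conf_hess (u_in b R x0) x = (C1 * \<alpha> + C2 * \<gamma>^2) *\<^sub>R Om + (C1 * \<gamma> - C3 * \<gamma>^2 * s) *\<^sub>R mat 1"
    unfolding ch by (simp add: algebra_simps)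
  thus ?thesis using K1 K2 by simp
qed




lemma line_deriv:
  fixes g :: "real^'n::finite \<Rightarrow> real"
  assumes "(g has_derivative (\<lambda>h. Dg \<bullet> h)) (at (y + t *\<^sub>R h))"
  shows "((\<lambda>s. g (y + s *\<^sub>R h)) has_real_derivative (Dg \<bullet> h)) (at t)"
proof -
  have l: "((\<lambda>s. y + s *\<^sub>R h) has_derivative (\<lambda>s. s *\<^sub>R h)) (at t)"
    by (rule derivative_eq_intros refl)+ simp
  show ?thesis
    by (rule has_derivative_imp_has_field_derivative[OF has_derivative_compose[OF l assms]])
       (simp add: inner_scaleR_right)
qed

lemma line_deriv_vec:
  fixes Dg :: "real^'n::finite \<Rightarrow> real^'n"
  assumes "(Dg has_derivative (\<lambda>k. H *v k)) (at y)"
  shows "((\<lambda>s. Dg (y + s *\<^sub>R h) \<bullet> h) has_real_derivative (h \<bullet> (H *v h))) (at 0)"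
proof -
  have l: "((\<lambda>s. y + s *\<^sub>R h) has_derivative (\<lambda>s. s *\<^sub>R h)) (at 0)"
    by (rule derivative_eq_intros refl)+ simp
  have c: "((\<lambda>s. Dg (y + s *\<^sub>R h)) has_derivative (\<lambda>s. H *v (s *\<^sub>R h))) (at 0)"
    using has_derivative_compose[OF l] assms by simp
  have "((\<lambda>s. Dg (y + s *\<^sub>R h) \<bullet> h) has_derivative (\<lambda>s. (H *v (s *\<^sub>R h)) \<bullet> h)) (at 0)"
    by (rule derivative_eq_intros c refl)+ simp
  thus ?thesis
    by (rule has_derivative_imp_has_field_derivative)
       (simp add: matrix_vector_mult_scaleR inner_commute)
qed

lemma touch_min:
  fixes g :: "real^'n::finite \<Rightarrow> real"
  assumes V: "open V" "y \<in> V" and min: "\<And>z. z \<in> V \<Longrightarrow> g y \<le> g z"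
    and dg: "\<And>z. z \<in> V \<Longrightarrow> (g has_derivative (\<lambda>h. Dg z \<bullet> h)) (at z)"
    and dH: "(Dg has_derivative (\<lambda>k. H *v k)) (at y)"
  shows "Dg y = 0" "h \<bullet> (H *v h) \<ge> 0"
proof -
  have ev: "eventually (\<lambda>z. g y \<le> g z) (at y)"
    using V min by (auto simp: eventually_at_topological)
  have "(\<lambda>h. Dg y \<bullet> h) = (\<lambda>h. 0)" by (rule has_derivative_local_min[OF dg[OF V(2)] ev])
  hence "Dg y \<bullet> Dg y = 0" by metis
  thus D0: "Dg y = 0" by simp
  show "h \<bullet> (H *v h) \<ge> 0"
  proof (rule ccontr)
    assume neg: "\<not> h \<bullet> (H *v h) \<ge> 0"
    hence hne: "h \<noteq> 0" by auto
    obtain \<delta> where \<delta>: "\<delta> > 0" "\<And>t. t > 0 \<Longrightarrow> t < \<delta> \<Longrightarrow> Dg (y + 0 *\<^sub>R h) \<bullet> h > Dg (y + (0 + t) *\<^sub>R h) \<bullet> h"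
      using DERIV_neg_dec_right[OF line_deriv_vec[OF dH, of h]] neg by force
    obtain \<epsilon> where \<epsilon>: "\<epsilon> > 0" "ball y \<epsilon> \<subseteq> V" using V open_contains_ball by blast
    define s where "s = min \<delta> (\<epsilon> / norm h) / 2"
    have nh: "norm h > 0" using hne by simp
    have s0: "s > 0" using \<delta> \<epsilon> nh by (simp add: s_def)
    have sd: "s < \<delta>" using \<delta> \<epsilon> nh by (simp add: s_def)
    have inV: "y + t *\<^sub>R h \<in> V" if "0 \<le> t" "t \<le> s" for t
    proof -
      have "t * norm h \<le> s * norm h" using that nh by (simp add: mult_right_mono)
      also have "s * norm h < \<epsilon>" using \<delta> \<epsilon> nh
        by (simp add: s_def min_def field_simps)
      finally have "dist y (y + t *\<^sub>R h) < \<epsilon>" using that by (simp add: dist_norm)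
      thus ?thesis using \<epsilon> by auto
    qed
    obtain z where z: "0 < z" "z < s"
      "g (y + s *\<^sub>R h) - g (y + 0 *\<^sub>R h) = (s - 0) * (Dg (y + z *\<^sub>R h) \<bullet> h)"
      using MVT2[OF s0, of "\<lambda>t. g (y + t *\<^sub>R h)" "\<lambda>t. Dg (y + t *\<^sub>R h) \<bullet> h"]
        line_deriv[OF dg[OF inV]] by blast
    have "Dg (y + z *\<^sub>R h) \<bullet> h < 0" using \<delta>(2)[of z] z sd D0 by simp
    hence "s * (Dg (y + z *\<^sub>R h) \<bullet> h) < 0" using s0 by (simp add: mult_pos_neg)
    hence "g (y + s *\<^sub>R h) < g y" using z by simp
    thus False using min[OF inV[of s]] s0 by simp
  qed
qed




lemma transp_inner: fixes A :: "real^'n::finite^'m::finite"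
  shows "x \<bullet> (transpose A *v y) = (A *v x) \<bullet> y"
  unfolding inner_vec_def matrix_vector_mult_def transpose_def
  apply (simp add: sum_distrib_left sum_distrib_right)
  apply (subst sum.swap)
  apply (simp add: mult_ac)
  done

lemma diag_mv: "diag_mat lam *v x = (\<chi> k. lam $ k * x $ k)"
proof -
  have e: "\<And>P a c::real. (if P then a else 0) * c = (if P then a * c else 0)" by simp
  show ?thesis by (simp add: vec_eq_iff diag_mat_def matrix_vector_mult_def e)
qed

lemma diag_axis: "diag_mat lam *v axis i 1 = lam $ i *\<^sub>R axis i (1::real)"
  by (simp add: diag_mv vec_eq_iff axis_def)

lemma eig_quad:
  fixes M :: "real^'n::finite^'n"
  assumes "eigvals M lam"
  shows "\<exists>h. h \<bullet> h = 1 \<and> h \<bullet> (M *v h) = lam $ i"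
proof -
  obtain Q where Q: "orthogonal_matrix Q" "M = transpose Q ** diag_mat lam ** Q"
    using assms by (auto simp: eigvals_def)
  define h where "h = transpose Q *v axis i 1"
  have QQ: "Q ** transpose Q = mat 1" using Q(1) by (simp add: orthogonal_matrix_def)
  have Qh: "Q *v h = axis i 1"
    unfolding h_def by (simp only: matrix_vector_mul_assoc QQ matrix_vector_mul_lid)
  have "h \<bullet> h = 1"
    by (subst (2) h_def, simp only: transp_inner Qh) (simp add: inner_axis_axis)
  moreover have "h \<bullet> (M *v h) = lam $ i"
    by (simp only: Q(2) matrix_vector_mul_assoc[symmetric] transp_inner Qh diag_axis) (simp add: inner_axis_axis)
  ultimately show ?thesis by blast
qed

lemma eig_lower:
  fixes M :: "real^'n::finite^'n"
  assumes "eigvals M lam" "\<And>h. h \<bullet> (M *v h) \<ge> t * (h \<bullet> h)"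
  shows "lam $ i \<ge> t"
proof -
  obtain h where "h \<bullet> h = 1" "h \<bullet> (M *v h) = lam $ i" using eig_quad[OF assms(1), of i] by blast
  thus ?thesis using assms(2)[of h] by simp
qed

lemma eig_upper:
  fixes M :: "real^'n::finite^'n"
  assumes "eigvals M lam" "\<And>h. h \<bullet> (M *v h) \<le> t * (h \<bullet> h)"
  shows "lam $ i \<le> t"
proof -
  obtain h where "h \<bullet> h = 1" "h \<bullet> (M *v h) = lam $ i" using eig_quad[OF assms(1), of i] by blast
  thus ?thesis using assms(2)[of h] by simp
qed

lemma eig_scalar: "eigvals (t *\<^sub>R mat 1 :: real^'n::finite^'n) (\<chi> i. t)"
  unfolding eigvals_def
proof (rule exI[of _ "mat 1"], intro conjI)
  show "orthogonal_matrix (mat 1 :: real^'n^'n)" by (rule orthogonal_matrix_id)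
  have "diag_mat (\<chi> i. t) = (t *\<^sub>R mat 1 :: real^'n^'n)" by (simp add: diag_mat_def vec_eq_iff mat_def)
  thus "t *\<^sub>R mat 1 = transpose (mat 1) ** diag_mat (\<chi> i. t) ** (mat 1 :: real^'n^'n)" by simp
qed




lemma structD:
  assumes "structural f \<Gamma>"
  shows "open \<Gamma>" "\<And>t lam. t > 0 \<Longrightarrow> lam \<in> \<Gamma> \<Longrightarrow> t *\<^sub>R lam \<in> \<Gamma>"
    "\<And>lam mu. lam \<in> \<Gamma> \<Longrightarrow> mu \<in> posCone \<Longrightarrow> lam + mu \<in> \<Gamma>"
    "continuous_on (closure \<Gamma>) f"
    "\<And>lam. lam \<in> \<Gamma> \<Longrightarrow> f lam > 0"
    "\<And>lam. lam \<in> frontier \<Gamma> \<Longrightarrow> f lam = 0"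
    "\<And>lam mu. lam \<in> \<Gamma> \<Longrightarrow> mu \<in> posCone \<Longrightarrow> f (lam + mu) \<ge> f lam"
    "\<exists>k>0. \<forall>lam\<in>closure \<Gamma>. \<forall>t>0. f (t *\<^sub>R lam) = t powr k * f lam"
  using assms unfolding structural_def by auto

lemma in_Gamma:
  assumes "structural f \<Gamma>" "lam \<in> closure \<Gamma>" "f lam = 1"
  shows "lam \<in> \<Gamma>"
  using assms structD(6)[OF assms(1)] closure_Un_frontier by fastforce

lemma tends_eps:
  fixes lam :: "real^'n::finite"
  shows "((\<lambda>e. lam + e *\<^sub>R (\<chi> i. 1)) \<longlongrightarrow> lam) (at_right 0)"
proof -
  have "((\<lambda>e. lam + e *\<^sub>R (\<chi> i. 1)) \<longlongrightarrow> lam + 0 *\<^sub>R (\<chi> i. 1)) (at_right 0)"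
    by (intro tendsto_intros)
  thus ?thesis by simp
qed

lemma f_sub:
  fixes lam :: "real^'n::finite"
  assumes S: "structural f \<Gamma>" and l0: "lam0 \<in> \<Gamma>" "f lam0 = 1"
    and ge: "\<And>i. lam $ i \<ge> lam0 $ i"
  shows "lam \<in> closure \<Gamma> \<and> f lam \<ge> 1"
proof -
  have inG: "lam + e *\<^sub>R (\<chi> i. 1) \<in> \<Gamma> \<and> f (lam + e *\<^sub>R (\<chi> i. 1)) \<ge> 1" if "e > 0" for e
  proof -
    have pc: "(lam - lam0 + e *\<^sub>R (\<chi> i. 1)) \<in> posCone"
      using ge that by (auto simp: posCone_def add_nonneg_pos)
    have eq: "lam + e *\<^sub>R (\<chi> i. 1) = lam0 + (lam - lam0 + e *\<^sub>R (\<chi> i. 1))" by simp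
    show ?thesis unfolding eq using structD(3,7)[OF S l0(1) pc] l0(2) by simp
  qed
  have ev: "eventually (\<lambda>e. lam + e *\<^sub>R (\<chi> i. 1) \<in> closure \<Gamma>) (at_right (0::real))"
    using inG closure_subset by (auto simp: eventually_at_right_less intro!: eventually_mono[OF eventually_at_right_less])
  have lc: "lam \<in> closure \<Gamma>"
    by (rule Lim_in_closed_set[OF closed_closure ev _ tends_eps]) simp
  have "((\<lambda>e. f (lam + e *\<^sub>R (\<chi> i. 1))) \<longlongrightarrow> f lam) (at_right 0)"
    by (rule continuous_on_tendsto_compose[OF structD(4)[OF S] tends_eps lc ev])
  moreover have "eventually (\<lambda>e. 1 \<le> f (lam + e *\<^sub>R (\<chi> i. 1))) (at_right (0::real))"
    using inG by (auto intro!: eventually_mono[OF eventually_at_right_less])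
  ultimately have "1 \<le> f lam" by (rule tendsto_lowerbound) simp
  thus ?thesis using lc by simp
qed

lemma f_super:
  fixes lam :: "real^'n::finite"
  assumes S: "structural f \<Gamma>" and l0: "lam0 \<in> \<Gamma>" "f lam0 = 1"
    and le: "\<And>i. lam $ i \<le> lam0 $ i"
  shows "lam \<notin> closure \<Gamma> \<or> f lam \<le> 1"
proof (cases "lam \<in> \<Gamma>")
  case False
  then show ?thesis using structD(6)[OF S] closure_Un_frontier by fastforce
next
  case True
  have ge: "f (lam0 + e *\<^sub>R (\<chi> i. 1)) \<ge> f lam" if "e > 0" for e
  proof -
    have pc: "(lam0 - lam + e *\<^sub>R (\<chi> i. 1)) \<in> posCone"
      using le that by (auto simp: posCone_def add_nonneg_pos)
    have eq: "lam0 + e *\<^sub>R (\<chi> i. 1) = lam + (lam0 - lam + e *\<^sub>R (\<chi> i. 1))" by simp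
    show ?thesis unfolding eq using structD(7)[OF S True pc] by simp
  qed
  have ev: "eventually (\<lambda>e. lam0 + e *\<^sub>R (\<chi> i. 1) \<in> closure \<Gamma>) (at_right (0::real))"
  proof -
    have "lam0 + e *\<^sub>R (\<chi> i. 1) \<in> \<Gamma>" if "e > 0" for e
      using structD(3)[OF S l0(1), of "e *\<^sub>R (\<chi> i. 1)"] that by (simp add: posCone_def)
    thus ?thesis using closure_subset by (auto intro!: eventually_mono[OF eventually_at_right_less])
  qed
  have "((\<lambda>e. f (lam0 + e *\<^sub>R (\<chi> i. 1))) \<longlongrightarrow> f lam0) (at_right 0)"
    by (rule continuous_on_tendsto_compose[OF structD(4)[OF S] tends_eps _ ev])
       (use l0 closure_subset in auto)
  moreover have "eventually (\<lambda>e. f lam \<le> f (lam0 + e *\<^sub>R (\<chi> i. 1))) (at_right (0::real))"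
    using ge by (auto intro!: eventually_mono[OF eventually_at_right_less])
  ultimately have "f lam \<le> f lam0" by (rule tendsto_lowerbound) simp
  thus ?thesis using l0 by simp
qed





lemma du_in: fixes x0 :: "real^'n::finite"
  assumes "R > 0" "y \<in> ball x0 R"
  shows "(u_in b R x0 has_derivative (\<lambda>h. Duf b R x0 y \<bullet> h)) (at y)"
  by (rule has_derivative_transform_within_open[OF deriv_u[OF assms] open_ball assms(2)])
     (simp add: u_in_Q)

lemma cont_u_in: fixes x0 :: "real^'n::finite"
  assumes "R > 0" shows "continuous_on (ball x0 R) (u_in b R x0)"
  by (meson assms continuous_at_imp_continuous_on du_in has_derivative_continuous)

lemma conf_diff:
  fixes u \<phi> :: "real^'n::finite \<Rightarrow> real"
  assumes "\<phi> y = u y" "grad \<phi> y = grad u y"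
  shows "conf_hess \<phi> y = conf_hess u y +
     (- (2 / (real CARD('n) - 2)) * u y powr (- (real CARD('n) + 2) / (real CARD('n) - 2))) *\<^sub>R (hess \<phi> y - hess u y)"
  unfolding conf_hess_def Let_def assms by (simp add: algebra_simps)

lemma touch_u_in:
  fixes x0 :: "real^'n::finite" and \<phi> :: "real^'n \<Rightarrow> real"
  assumes N: "CARD('n) \<ge> 3" and R: "R > 0" and b: "b > 0"
    and U: "open U" "y \<in> U" "U \<subseteq> ball x0 R" and C2: "C2_on \<phi> U"
    and eq: "\<phi> y = u_in b R x0 y"
  shows "(\<forall>x\<in>U. u_in b R x0 x \<le> \<phi> x) \<Longrightarrow> h \<bullet> (- conf_hess \<phi> y *v h) \<ge> tval b CARD('n) * (h \<bullet> h)"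
    and "(\<forall>x\<in>U. \<phi> x \<le> u_in b R x0 x) \<Longrightarrow> h \<bullet> (- conf_hess \<phi> y *v h) \<le> tval b CARD('n) * (h \<bullet> h)"
proof -
  obtain D\<phi> H\<phi> where d\<phi>: "\<And>x. x \<in> U \<Longrightarrow> (\<phi> has_derivative (\<lambda>h. D\<phi> x \<bullet> h)) (at x)"
    "\<And>x. x \<in> U \<Longrightarrow> (D\<phi> has_derivative (\<lambda>h. H\<phi> x *v h)) (at x)"
    using C2 unfolding C2_on_def by blast
  have yb: "y \<in> ball x0 R" using U by blast
  have gh: "grad \<phi> y = D\<phi> y" "hess \<phi> y = H\<phi> y"
    using grad_hess_eq[OF U(1,2) d\<phi>(1) d\<phi>(2)[OF U(2)]] by auto
  have ghu: "grad (u_in b R x0) y = Duf b R x0 y" "hess (u_in b R x0) y = Hf b R x0 y"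
    using u_in_derivs[OF R yb] by auto
  have dg: "((\<lambda>x. \<phi> x - u_in b R x0 x) has_derivative (\<lambda>h. (D\<phi> x - Duf b R x0 x) \<bullet> h)) (at x)"
    if "x \<in> U" for x
    using has_derivative_diff[OF d\<phi>(1)[OF that] du_in[OF R subsetD[OF U(3) that], where b=b]] that U
    by (auto simp: inner_diff_left)
  have dH: "((\<lambda>x. D\<phi> x - Duf b R x0 x) has_derivative (\<lambda>h. (H\<phi> y - Hf b R x0 y) *v h)) (at y)"
    using has_derivative_diff[OF d\<phi>(2)[OF U(2)] deriv_Du[OF R yb, where b=b]]
    by (simp add: matrix_vector_mult_diff_rdistrib)
  have dg': "((\<lambda>x. u_in b R x0 x - \<phi> x) has_derivative (\<lambda>h. (Duf b R x0 x - D\<phi> x) \<bullet> h)) (at x)"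
    if "x \<in> U" for x
    using has_derivative_diff[OF du_in[OF R subsetD[OF U(3) that], where b=b] d\<phi>(1)[OF that]] that U
    by (auto simp: inner_diff_left)
  have dH': "((\<lambda>x. Duf b R x0 x - D\<phi> x) has_derivative (\<lambda>h. (Hf b R x0 y - H\<phi> y) *v h)) (at y)"
    using has_derivative_diff[OF deriv_Du[OF R yb, where b=b] d\<phi>(2)[OF U(2)]]
    by (simp add: matrix_vector_mult_diff_rdistrib)
  define K where "K = (2 / (real CARD('n) - 2)) * u_in b R x0 y powr (- (real CARD('n) + 2) / (real CARD('n) - 2))"
  have K0: "K \<ge> 0" using N by (simp add: K_def)
  have cu: "- conf_hess (u_in b R x0) y = tval b CARD('n) *\<^sub>R mat 1" by (rule conf_u_in[OF R yb b N])
  have form: "- conf_hess \<phi> y = tval b CARD('n) *\<^sub>R mat 1 + K *\<^sub>R (H\<phi> y - Hf b R x0 y)"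
    if "grad \<phi> y = grad (u_in b R x0) y" for dummy :: bool
  proof -
    have "- conf_hess \<phi> y = - conf_hess (u_in b R x0) y + K *\<^sub>R (hess \<phi> y - hess (u_in b R x0) y)"
      unfolding conf_diff[OF eq that] K_def by (simp add: algebra_simps)
    thus ?thesis unfolding cu gh ghu .
  qed
  have quad: "h \<bullet> (- conf_hess \<phi> y *v h) = tval b CARD('n) * (h \<bullet> h) + K * (h \<bullet> ((H\<phi> y - Hf b R x0 y) *v h))"
    if "grad \<phi> y = grad (u_in b R x0) y"
    using form[OF that] by (simp add: matrix_vector_mult_add_rdistrib scaleR_mv inner_add_right)
  show "h \<bullet> (- conf_hess \<phi> y *v h) \<ge> tval b CARD('n) * (h \<bullet> h)" if A: "\<forall>x\<in>U. u_in b R x0 x \<le> \<phi> x"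
  proof -
    have mn: "\<And>z. z \<in> U \<Longrightarrow> \<phi> y - u_in b R x0 y \<le> \<phi> z - u_in b R x0 z" using A eq by auto
    have "D\<phi> y - Duf b R x0 y = 0" "h \<bullet> ((H\<phi> y - Hf b R x0 y) *v h) \<ge> 0"
      using touch_min[OF U(1,2) mn dg dH] by auto
    hence "grad \<phi> y = grad (u_in b R x0) y" "h \<bullet> ((H\<phi> y - Hf b R x0 y) *v h) \<ge> 0"
      using gh ghu by auto
    thus ?thesis using quad K0 by simp
  qed
  show "h \<bullet> (- conf_hess \<phi> y *v h) \<le> tval b CARD('n) * (h \<bullet> h)" if A: "\<forall>x\<in>U. \<phi> x \<le> u_in b R x0 x"
  proof -
    have mn: "\<And>z. z \<in> U \<Longrightarrow> u_in b R x0 y - \<phi> y \<le> u_in b R x0 z - \<phi> z" using A eq by auto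
    have "Duf b R x0 y - D\<phi> y = 0" "h \<bullet> ((Hf b R x0 y - H\<phi> y) *v h) \<ge> 0"
      using touch_min[OF U(1,2) mn dg' dH'] by auto
    hence "grad \<phi> y = grad (u_in b R x0) y" "h \<bullet> ((H\<phi> y - Hf b R x0 y) *v h) \<le> 0"
      using gh ghu by (auto simp: matrix_vector_mult_diff_rdistrib inner_diff_right)
    thus ?thesis using quad K0 by (simp add: mult_nonneg_nonpos)
  qed
qed




lemma sphere_ne: fixes x0 :: "real^'n::finite" assumes "R \<ge> 0"
  shows "x0 + R *\<^sub>R axis i 1 \<in> sphere x0 R"
  using assms by (simp add: dist_norm)

lemma infdist_sphere_ge: fixes x0 :: "real^'n::finite"
  assumes "R > 0" "x \<in> ball x0 R"
  shows "R - dist x x0 \<le> infdist x (sphere x0 R)"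
proof -
  have ne: "sphere x0 R \<noteq> {}" using sphere_ne[of R x0] assms(1) by auto
  show ?thesis
    unfolding infdist_notempty[OF ne]
  proof (rule cINF_greatest[OF ne])
    fix z assume "z \<in> sphere x0 R"
    hence "dist z x0 = R" by (simp add: dist_commute)
    thus "R - dist x x0 \<le> dist x z" using dist_triangle[of z x0 x] by (simp add: dist_commute)
  qed
qed

lemma infdist_sphere_le: fixes x0 :: "real^'n::finite"
  assumes "R > 0" "y \<in> ball x0 R" "y \<noteq> x0"
  shows "infdist y (sphere x0 R) \<le> R - dist y x0"
proof -
  define d where "d = dist y x0"
  have d0: "d > 0" using assms by (simp add: d_def)
  have dR: "d < R" using assms by (simp add: d_def dist_commute)
  define z where "z = x0 + (R / d) *\<^sub>R (y - x0)"
  have nd: "norm (y - x0) = d" by (simp add: d_def dist_norm)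
  have "z \<in> sphere x0 R" using d0 assms(1) by (simp add: z_def dist_norm nd)
  moreover have "dist y z = R - d"
  proof -
    have "y - z = (1 - R/d) *\<^sub>R (y - x0)" by (simp add: z_def algebra_simps)
    hence "dist y z = \<bar>1 - R/d\<bar> * d" by (simp add: dist_norm nd)
    also have "\<dots> = R - d" using d0 dR by (simp add: abs_if field_simps)
    finally show ?thesis .
  qed
  ultimately show ?thesis using infdist_le[of z "sphere x0 R" y] by (simp add: d_def)
qed

lemma blow_u_in: fixes x0 :: "real^'n::finite"
  assumes N: "CARD('n) \<ge> 3" and R: "R > 0" and b: "b > 0"
  shows "\<exists>d>0. \<forall>x\<in>ball x0 R. R - dist x x0 < d \<longrightarrow> u_in b R x0 x > M"
proof -
  define p where "p = (real CARD('n) - 2)/2"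
  have p0: "p > 0" using N by (simp add: p_def)
  define M' where "M' = max M 1"
  define B where "B = (M'/b) powr (1/p)"
  have B0: "B \<ge> 0" by (simp add: B_def)
  have Bp: "B powr p = M'/b" using p0 b by (simp add: B_def powr_powr M'_def)
  define d where "d = 1 / (2 * (B + 1))"
  have d0: "d > 0" using B0 by (simp add: d_def)
  have "u_in b R x0 x > M" if x: "x \<in> ball x0 R" "R - dist x x0 < d" for x
  proof -
    define r where "r = dist x x0"
    have r0: "r \<ge> 0" "r < R" using x by (auto simp: r_def dist_commute)
    have Rr: "R - r > 0" using r0 by simp
    have le: "1 / (2 * (R - r)) \<le> R / (R^2 - r^2)"
    proof -
      have "R^2 - r^2 = (R - r) * (R + r)" by (simp add: power2_eq_square algebra_simps)
      moreover have "(R - r) * (R + r) \<le> (R - r) * (2 * R)" using r0 Rr by (intro mult_left_mono) auto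
      moreover have "(R - r) * (R + r) > 0" using r0 Rr by simp
      ultimately have "R / ((R - r) * (2 * R)) \<le> R / (R^2 - r^2)"
        using R Rr r0 by (intro divide_left_mono) (auto intro!: mult_pos_pos)
      moreover have "R / ((R - r) * (2 * R)) = 1 / (2 * (R - r))" using R by simp
      ultimately show ?thesis by simp
    qed
    have gt: "B < 1 / (2 * (R - r))"
    proof -
      have "2 * (R - r) * (B + 1) < 1" using x(2) Rr B0 unfolding d_def r_def[symmetric]
        by (simp add: field_simps)
      thus ?thesis using Rr B0 by (simp add: field_simps)
    qed
    have "M'/b < (1 / (2 * (R - r))) powr p" using powr_less_mono2[OF p0 B0 gt] Bp by simp
    also have "\<dots> \<le> (R / (R^2 - r^2)) powr p" using powr_mono2[OF _ _ le] p0 Rr by simp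
    finally have "M' < b * (R / (R^2 - r^2)) powr p" using b by (simp add: field_simps)
    thus ?thesis by (simp add: u_in_def r_def p_def M'_def)
  qed
  thus ?thesis using d0 by blast
qed

lemma cont_usc_lsc: assumes "continuous_on S u" shows "usc_on S u" "lsc_on S u"
proof -
  have *: "\<exists>d>0. \<forall>y\<in>S. dist y x < d \<longrightarrow> u y < u x + e \<and> u y > u x - e" if xs: "x \<in> S" "e > 0" for x e
  proof -
    obtain d where "d > 0" "\<forall>y\<in>S. dist y x < d \<longrightarrow> dist (u y) (u x) < e"
      using assms xs unfolding continuous_on_iff by metis
    thus ?thesis by (auto simp: dist_real_def abs_diff_less_iff)
  qed
  show "usc_on S u" unfolding usc_on_def using * by meson
  show "lsc_on S u" unfolding lsc_on_def using * by meson
qed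

lemma pos_u_in: fixes x0 :: "real^'n::finite"
  assumes "R > 0" "b > 0" "x \<in> ball x0 R" shows "u_in b R x0 x > 0"
proof -
  have "Qf R x0 x > 0" by (rule Q_pos[OF assms(1,3)])
  hence "Qf R x0 x powr ((real CARD('n) - 2)/2) > 0" by simp
  thus ?thesis unfolding u_in_Q[OF assms(3)] using assms(2) by (rule mult_pos_pos[rotated])
qed




lemma canonD:
  assumes "canonical_const f \<Gamma> a" "R > 0"
  shows "a > 0" "C2_on (u_in a R x0) (ball x0 R)"
    "\<And>y. y \<in> ball x0 R \<Longrightarrow> eq_cond f \<Gamma> (- conf_hess (u_in a R x0) y)"
  using assms unfolding canonical_const_def by auto

lemma lam0:
  fixes f :: "real^'n::finite \<Rightarrow> real"
  assumes N: "CARD('n) \<ge> 3" and S: "structural f \<Gamma>" and C: "canonical_const f \<Gamma> a"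
  shows "(\<chi> i. tval a CARD('n)) \<in> \<Gamma>" "f (\<chi> i. tval a CARD('n)) = 1"
proof -
  have a: "a > 0" using canonD[OF C, of 1] by simp
  have y: "(0::real^'n) \<in> ball 0 1" by simp
  have "eq_cond f \<Gamma> (tval a CARD('n) *\<^sub>R mat 1)"
    using canonD(3)[OF C _ y] conf_u_in[OF _ y a N] by simp
  hence "(\<chi> i. tval a CARD('n)) \<in> closure \<Gamma>" "f (\<chi> i. tval a CARD('n)) = 1"
    using eig_scalar unfolding eq_cond_def by blast+
  thus "(\<chi> i. tval a CARD('n)) \<in> \<Gamma>" "f (\<chi> i. tval a CARD('n)) = 1"
    using in_Gamma[OF S] by auto
qed

lemma partA:
  fixes f :: "real^'n::finite \<Rightarrow> real"
  assumes N: "CARD('n) \<ge> 3" and S: "structural f \<Gamma>" and C: "canonical_const f \<Gamma> a" and R: "R > 0"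
  shows "blowup_sol f \<Gamma> R x0 (u_in a R x0)"
proof -
  have a: "a > 0" using canonD[OF C R] by simp
  have cont: "continuous_on (ball x0 R) (u_in a R x0)" by (rule cont_u_in[OF R])
  note L = lam0[OF N S C]
  have sub: "visc_sub f \<Gamma> (ball x0 R) (u_in a R x0)"
    unfolding visc_sub_def
  proof (intro conjI cont_usc_lsc(1)[OF cont] ballI allI impI)
    fix y \<phi> U assume A: "y \<in> ball x0 R" "open U \<and> y \<in> U \<and> U \<subseteq> ball x0 R \<and> C2_on \<phi> U \<and> \<phi> y = u_in a R x0 y \<and> (\<forall>x\<in>U. u_in a R x0 x \<le> \<phi> x)"
    show "sub_cond f \<Gamma> (- conf_hess \<phi> y)"
      unfolding sub_cond_def
    proof (intro allI impI)
      fix lam assume E: "eigvals (- conf_hess \<phi> y) lam"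
      have "\<And>i. lam $ i \<ge> (\<chi> i. tval a CARD('n)) $ i"
        using eig_lower[OF E touch_u_in(1)[OF N R a]] A by auto
      thus "lam \<in> closure \<Gamma> \<and> 1 \<le> f lam" by (rule f_sub[OF S L])
    qed
  qed
  have super: "visc_super f \<Gamma> (ball x0 R) (u_in a R x0)"
    unfolding visc_super_def
  proof (intro conjI cont_usc_lsc(2)[OF cont] ballI allI impI)
    fix y \<phi> U assume A: "y \<in> ball x0 R" "open U \<and> y \<in> U \<and> U \<subseteq> ball x0 R \<and> C2_on \<phi> U \<and> \<phi> y = u_in a R x0 y \<and> (\<forall>x\<in>U. \<phi> x \<le> u_in a R x0 x)"
    show "super_cond f \<Gamma> (- conf_hess \<phi> y)"
      unfolding super_cond_def
    proof (intro allI impI)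
      fix lam assume E: "eigvals (- conf_hess \<phi> y) lam"
      have "\<And>i. lam $ i \<le> (\<chi> i. tval a CARD('n)) $ i"
        using eig_upper[OF E touch_u_in(2)[OF N R a]] A by auto
      thus "lam \<notin> closure \<Gamma> \<or> f lam \<le> 1" by (rule f_super[OF S L])
    qed
  qed
  have pos: "\<forall>x\<in>ball x0 R. u_in a R x0 x > 0" using pos_u_in[OF R a] by blast
  have blow: "\<forall>M. \<exists>d>0. \<forall>x\<in>ball x0 R. infdist x (sphere x0 R) < d \<longrightarrow> u_in a R x0 x > M"
  proof
    fix M
    obtain d where d: "d > 0" "\<forall>x\<in>ball x0 R. R - dist x x0 < d \<longrightarrow> u_in a R x0 x > M"
      using blow_u_in[OF N R a] by blast
    show "\<exists>d>0. \<forall>x\<in>ball x0 R. infdist x (sphere x0 R) < d \<longrightarrow> u_in a R x0 x > M"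
      using d infdist_sphere_ge[OF R] by (meson le_less_trans)
  qed
  show ?thesis unfolding blowup_sol_def visc_sol_def using cont sub super pos blow by blast
qed




lemma C2_scale:
  assumes "C2_on u S" "open V" "V \<subseteq> S"
  shows "C2_on (\<lambda>x. c * u x) V"
proof -
  obtain Du H where d: "\<forall>x\<in>S. (u has_derivative (\<lambda>h. Du x \<bullet> h)) (at x) \<and> (Du has_derivative (\<lambda>h. H x *v h)) (at x)"
    "continuous_on S H"
    using assms(1) unfolding C2_on_def by blast
  have "\<forall>x\<in>V. ((\<lambda>x. c * u x) has_derivative (\<lambda>h. (c *\<^sub>R Du x) \<bullet> h)) (at x) \<and>
          ((\<lambda>x. c *\<^sub>R Du x) has_derivative (\<lambda>h. (c *\<^sub>R H x) *v h)) (at x)"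
  proof
    fix x assume "x \<in> V"
    hence x: "x \<in> S" using assms(3) by blast
    have "((\<lambda>x. c * u x) has_derivative (\<lambda>h. c * (Du x \<bullet> h))) (at x)"
      using d(1) x by (intro has_derivative_mult_right) auto
    moreover have "((\<lambda>x. c *\<^sub>R Du x) has_derivative (\<lambda>h. c *\<^sub>R (H x *v h))) (at x)"
      using d(1) x by (intro has_derivative_scaleR_right) auto
    ultimately show "((\<lambda>x. c * u x) has_derivative (\<lambda>h. (c *\<^sub>R Du x) \<bullet> h)) (at x) \<and>
          ((\<lambda>x. c *\<^sub>R Du x) has_derivative (\<lambda>h. (c *\<^sub>R H x) *v h)) (at x)"
      by (simp add: scaleR_mv)
  qed
  moreover have "continuous_on V (\<lambda>x. c *\<^sub>R H x)"
    using continuous_on_subset[OF d(2) assms(3)] by (intro continuous_intros)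
  ultimately show ?thesis unfolding C2_on_def using assms(2)
    by (intro conjI exI[where x="\<lambda>x. c *\<^sub>R Du x"] exI[where x="\<lambda>x. c *\<^sub>R H x"]) blast+
qed

lemma u_in_scale: "u_in (c * a) R x0 = (\<lambda>x. c * u_in a R x0 x)"
  by (simp add: u_in_def fun_eq_iff)

lemma tval_scale: assumes "c > 0" "a > 0"
  shows "(\<chi> i. tval (c * a) N) = (c powr (-4 / (real N - 2))) *\<^sub>R (\<chi> i. tval a N)"
  using assms by (simp add: tval_def vec_eq_iff powr_mult)

lemma homog:
  assumes S: "structural f \<Gamma>" and l: "lam \<in> closure \<Gamma>" "f lam = 1" and s: "s > 0"
  shows "\<exists>k>0. f (s *\<^sub>R lam) = s powr k"
  using structD(8)[OF S] l s by force

lemma no_touch_above: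
  fixes f :: "real^'n::finite \<Rightarrow> real" and v :: "real^'n \<Rightarrow> real"
  assumes N: "CARD('n) \<ge> 3" and S: "structural f \<Gamma>" and C: "canonical_const f \<Gamma> a"
    and R: "R' > 0" and c: "c > 1" and V: "visc_sub f \<Gamma> \<Omega> v"
    and U: "open U" "U \<subseteq> ball x0 R'" "U \<subseteq> \<Omega>" "xm \<in> U"
    and eq: "v xm = c * u_in a R' x0 xm" and le: "\<forall>x\<in>U. v x \<le> c * u_in a R' x0 x"
  shows False
proof -
  have a: "a > 0" using canonD[OF C R] by simp
  have ca: "c * a > 0" using a c by simp
  have C2: "C2_on (u_in (c * a) R' x0) U"
    unfolding u_in_scale by (rule C2_scale[OF canonD(2)[OF C R] U(1,2)])
  have xb: "xm \<in> ball x0 R'" using U by blast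
  have V': "\<And>y \<phi> U. y \<in> \<Omega> \<Longrightarrow> open U \<Longrightarrow> y \<in> U \<Longrightarrow> U \<subseteq> \<Omega> \<Longrightarrow> C2_on \<phi> U \<Longrightarrow> \<phi> y = v y \<Longrightarrow> (\<forall>x\<in>U. v x \<le> \<phi> x) \<Longrightarrow> sub_cond f \<Gamma> (- conf_hess \<phi> y)"
    using V unfolding visc_sub_def by blast
  have "sub_cond f \<Gamma> (- conf_hess (u_in (c * a) R' x0) xm)"
    by (rule V'[OF _ U(1) U(4) U(3) C2]) (use U eq le in \<open>auto simp: u_in_scale\<close>)
  hence "f (\<chi> i. tval (c * a) CARD('n)) \<ge> 1"
    unfolding conf_u_in[OF R xb ca N] sub_cond_def using eig_scalar by blast
  moreover
  define s where "s = c powr (-4 / (real CARD('n) - 2))"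
  have s0: "s > 0" using c by (simp add: s_def)
  have s1: "s < 1"
  proof -
    have e: "-4 / (real CARD('n) - 2) < 0" using N by (simp add: divide_neg_pos)
    have "c powr (-4 / (real CARD('n) - 2)) < c powr 0" by (simp only: powr_less_cancel_iff[OF c] e)
    thus ?thesis using c by (simp add: s_def)
  qed
  obtain k where k: "k > 0" "f (s *\<^sub>R (\<chi> i. tval a CARD('n))) = s powr k"
    using homog[OF S _ lam0(2)[OF N S C] s0] lam0(1)[OF N S C] closure_subset by blast
  have "s powr k < 1 powr k" by (rule powr_less_mono2[OF k(1)]) (use s0 s1 in auto)
  moreover have eqv: "(\<chi> i. tval (c * a) CARD('n)) = s *\<^sub>R (\<chi> i. tval a CARD('n))"
    using tval_scale[OF _ a, of c] c by (simp add: s_def)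
  ultimately show False using k by (simp only: eqv powr_one_eq_one)
qed

lemma no_touch_below:
  fixes f :: "real^'n::finite \<Rightarrow> real" and v :: "real^'n \<Rightarrow> real"
  assumes N: "CARD('n) \<ge> 3" and S: "structural f \<Gamma>" and C: "canonical_const f \<Gamma> a"
    and R: "R' > 0" and c: "0 < c" "c < 1" and V: "visc_super f \<Gamma> \<Omega> v"
    and U: "open U" "U \<subseteq> ball x0 R'" "U \<subseteq> \<Omega>" "xm \<in> U"
    and eq: "v xm = c * u_in a R' x0 xm" and le: "\<forall>x\<in>U. c * u_in a R' x0 x \<le> v x"
  shows False
proof -
  have a: "a > 0" using canonD[OF C R] by simp
  have ca: "c * a > 0" using a c by simp
  have C2: "C2_on (u_in (c * a) R' x0) U"
    unfolding u_in_scale by (rule C2_scale[OF canonD(2)[OF C R] U(1,2)])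
  have xb: "xm \<in> ball x0 R'" using U by blast
  have V': "\<And>y \<phi> U. y \<in> \<Omega> \<Longrightarrow> open U \<Longrightarrow> y \<in> U \<Longrightarrow> U \<subseteq> \<Omega> \<Longrightarrow> C2_on \<phi> U \<Longrightarrow> \<phi> y = v y \<Longrightarrow> (\<forall>x\<in>U. \<phi> x \<le> v x) \<Longrightarrow> super_cond f \<Gamma> (- conf_hess \<phi> y)"
    using V unfolding visc_super_def by blast
  have "super_cond f \<Gamma> (- conf_hess (u_in (c * a) R' x0) xm)"
    by (rule V'[OF _ U(1) U(4) U(3) C2]) (use U eq le in \<open>auto simp: u_in_scale\<close>)
  hence H: "(\<chi> i. tval (c * a) CARD('n)) \<notin> closure \<Gamma> \<or> f (\<chi> i. tval (c * a) CARD('n)) \<le> 1"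
    unfolding conf_u_in[OF R xb ca N] super_cond_def using eig_scalar by blast
  define s where "s = c powr (-4 / (real CARD('n) - 2))"
  have s0: "s > 0" using c by (simp add: s_def)
  have s1: "s > 1"
  proof -
    have "(1/c) powr (4 / (real CARD('n) - 2)) > (1/c) powr 0" using c N by simp
    thus ?thesis using c by (simp add: s_def powr_divide powr_minus_divide)
  qed
  obtain k where k: "k > 0" "f (s *\<^sub>R (\<chi> i. tval a CARD('n))) = s powr k"
    using homog[OF S _ lam0(2)[OF N S C] s0] lam0(1)[OF N S C] closure_subset by blast
  have "s *\<^sub>R (\<chi> i. tval a CARD('n)) \<in> \<Gamma>" using structD(2)[OF S s0 lam0(1)[OF N S C]] .
  hence inc: "s *\<^sub>R (\<chi> i. tval a CARD('n)) \<in> closure \<Gamma>" using closure_subset by blast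
  have "1 powr k < s powr k" by (rule powr_less_mono2[OF k(1)]) (use s1 in auto)
  moreover have eqv: "(\<chi> i. tval (c * a) CARD('n)) = s *\<^sub>R (\<chi> i. tval a CARD('n))"
    using tval_scale[OF c(1) a] by (simp add: s_def)
  ultimately show False using H inc k by (simp only: eqv powr_one_eq_one simp_thms)
qed




lemma blowD:
  assumes "blowup_sol f \<Gamma> R x0 v"
  shows "continuous_on (ball x0 R) v" "visc_sub f \<Gamma> (ball x0 R) v" "visc_super f \<Gamma> (ball x0 R) v"
    "\<And>x. x \<in> ball x0 R \<Longrightarrow> v x > 0"
    "\<And>M. \<exists>d>0. \<forall>x\<in>ball x0 R. infdist x (sphere x0 R) < d \<longrightarrow> v x > M"
  using assms unfolding blowup_sol_def visc_sol_def by auto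

lemma upper_R':
  fixes f :: "real^'n::finite \<Rightarrow> real"
  assumes N: "CARD('n) \<ge> 3" and S: "structural f \<Gamma>" and C: "canonical_const f \<Gamma> a"
    and R': "R' > 0" "R' < R" and x: "dist x0 x < R'" and v: "blowup_sol f \<Gamma> R x0 v"
  shows "v x \<le> u_in a R' x0 x"
proof (rule ccontr)
  assume contra: "\<not> v x \<le> u_in a R' x0 x"
  have a: "a > 0" using canonD[OF C R'(1)] by simp
  define w where "w = u_in a R' x0"
  have cb: "cball x0 R' \<subseteq> ball x0 R" using R' by auto
  have vc: "continuous_on (ball x0 R) v" using blowD(1)[OF v] .
  obtain xM where xM: "xM \<in> cball x0 R'" "\<forall>y\<in>cball x0 R'. v y \<le> v xM"
    using continuous_attains_sup[OF compact_cball, of x0 R' v] continuous_on_subset[OF vc cb] R' by force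
  obtain d where d: "d > 0" "\<forall>y\<in>ball x0 R'. R' - dist y x0 < d \<longrightarrow> w y > v xM"
    using blow_u_in[OF N R'(1) a, of x0 "v xM"] unfolding w_def by blast
  define r where "r = max (dist x0 x) (R' - d/2)"
  have rR: "r < R'" using x d R' by (simp add: r_def)
  have Kb: "cball x0 r \<subseteq> ball x0 R'" using rR by auto
  have xK: "x \<in> cball x0 r" by (simp add: r_def)
  have wpos: "\<And>y. y \<in> ball x0 R' \<Longrightarrow> w y > 0" unfolding w_def by (rule pos_u_in[OF R'(1) a])
  have gc: "continuous_on (cball x0 r) (\<lambda>y. v y / w y)"
  proof -
    have c1: "continuous_on (cball x0 r) v" using continuous_on_subset[OF vc] Kb cb by (meson subset_trans ball_subset_cball)
    have c2: "continuous_on (cball x0 r) w" using continuous_on_subset[OF cont_u_in[OF R'(1)] Kb] by (simp add: w_def)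
    have c3: "\<forall>y\<in>cball x0 r. w y \<noteq> 0" 
    proof
      fix y assume "y \<in> cball x0 r"
      hence "w y > 0" using wpos Kb by blast
      thus "w y \<noteq> 0" by simp
    qed
    show ?thesis by (rule continuous_on_divide[OF c1 c2 c3])
  qed
  obtain xm where xm: "xm \<in> cball x0 r" "\<forall>y\<in>cball x0 r. v y / w y \<le> v xm / w xm"
    using continuous_attains_sup[OF compact_cball _ gc] xK by blast
  define c where "c = v xm / w xm"
  have xmb: "xm \<in> ball x0 R'" using xm Kb by blast
  have "v x / w x > 1" using contra wpos[of x] xK Kb by (auto simp: w_def)
  hence c1: "c > 1" using xm(2) xK unfolding c_def by force
  have le: "\<forall>y\<in>ball x0 R'. v y \<le> c * w y"
  proof
    fix y assume y: "y \<in> ball x0 R'"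
    show "v y \<le> c * w y"
    proof (cases "y \<in> cball x0 r")
      case True
      hence "v y / w y \<le> c" using xm(2) unfolding c_def by blast
      thus ?thesis using wpos[OF y] by (simp add: pos_divide_le_eq mult.commute)
    next
      case False
      hence "dist y x0 > r" by (simp add: dist_commute)
      moreover have "r \<ge> R' - d/2" by (simp add: r_def)
      ultimately have "R' - dist y x0 < d" using d(1) by linarith
      hence "w y > v xM" using d y by blast
      moreover have "v y \<le> v xM" using xM y by auto
      moreover have "w y \<le> c * w y" using c1 wpos[OF y] by simp
      ultimately show ?thesis by linarith
    qed
  qed
  have eq: "v xm = c * w xm" using wpos[OF xmb] by (simp add: c_def)
  show False
    by (rule no_touch_above[OF N S C R'(1) c1 blowD(2)[OF v] open_ball order_refl _ xmb])
       (use cb eq le in \<open>auto simp: w_def\<close>)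
qed

lemma lower_R':
  fixes f :: "real^'n::finite \<Rightarrow> real"
  assumes N: "CARD('n) \<ge> 3" and S: "structural f \<Gamma>" and C: "canonical_const f \<Gamma> a"
    and R: "R > 0" "R < R'" and x: "x \<in> ball x0 R" and v: "blowup_sol f \<Gamma> R x0 v"
  shows "u_in a R' x0 x \<le> v x"
proof (rule ccontr)
  assume contra: "\<not> u_in a R' x0 x \<le> v x"
  have R'0: "R' > 0" using R by simp
  have a: "a > 0" using canonD[OF C R'0] by simp
  define w where "w = u_in a R' x0"
  have cb: "cball x0 R \<subseteq> ball x0 R'" using R by auto
  have vc: "continuous_on (ball x0 R) v" using blowD(1)[OF v] .
  have wc: "continuous_on (ball x0 R') w" unfolding w_def by (rule cont_u_in[OF R'0])
  have wpos: "\<And>y. y \<in> ball x0 R' \<Longrightarrow> w y > 0" unfolding w_def by (rule pos_u_in[OF R'0 a])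
  have vpos: "\<And>y. y \<in> ball x0 R \<Longrightarrow> v y > 0" by (rule blowD(4)[OF v])
  obtain xM where xM: "xM \<in> cball x0 R" "\<forall>y\<in>cball x0 R. w y \<le> w xM"
    using continuous_attains_sup[OF compact_cball, of x0 R w] continuous_on_subset[OF wc cb] R by force
  obtain d where d: "d > 0" "\<forall>y\<in>ball x0 R. infdist y (sphere x0 R) < d \<longrightarrow> v y > w xM"
    using blowD(5)[OF v, of "w xM"] by blast
  define d' where "d' = min d R"
  have d': "d' > 0" "d' \<le> d" "d' \<le> R" using d R by (auto simp: d'_def)
  define r where "r = max (dist x0 x) (R - d'/2)"
  have rR: "r < R" using x d' by (simp add: r_def)
  have r0: "r > 0" using d' by (simp add: r_def)
  have Kb: "cball x0 r \<subseteq> ball x0 R" using rR by auto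
  have xK: "x \<in> cball x0 r" by (simp add: r_def)
  have gc: "continuous_on (cball x0 r) (\<lambda>y. w y / v y)"
  proof -
    have c1: "continuous_on (cball x0 r) w" using continuous_on_subset[OF wc] Kb cb by (meson subset_trans ball_subset_cball)
    have c2: "continuous_on (cball x0 r) v" using continuous_on_subset[OF vc Kb] .
    have c3: "\<forall>y\<in>cball x0 r. v y \<noteq> 0" 
    proof
      fix y assume "y \<in> cball x0 r"
      hence "v y > 0" using vpos Kb by blast
      thus "v y \<noteq> 0" by simp
    qed
    show ?thesis by (rule continuous_on_divide[OF c1 c2 c3])
  qed
  obtain xm where xm: "xm \<in> cball x0 r" "\<forall>y\<in>cball x0 r. w y / v y \<le> w xm / v xm"
    using continuous_attains_sup[OF compact_cball _ gc] xK by blast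
  define c where "c = w xm / v xm"
  have xmb: "xm \<in> ball x0 R" using xm Kb by blast
  have "w x / v x > 1" using contra vpos[of x] x by (auto simp: w_def)
  hence c1: "c > 1" using xm(2) xK unfolding c_def by force
  have le: "\<forall>y\<in>ball x0 R. (1/c) * w y \<le> v y"
  proof
    fix y assume y: "y \<in> ball x0 R"
    have yb': "y \<in> ball x0 R'" using y R by auto
    show "(1/c) * w y \<le> v y"
    proof (cases "y \<in> cball x0 r")
      case True
      hence "w y / v y \<le> c" using xm(2) unfolding c_def by blast
      hence "w y \<le> c * v y" using vpos[OF y] by (simp add: pos_divide_le_eq mult.commute)
      thus ?thesis using c1 by (simp add: field_simps)
    next
      case False
      hence dy: "dist y x0 > r" by (simp add: dist_commute)
      hence yne: "y \<noteq> x0" using r0 by auto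
      have "infdist y (sphere x0 R) \<le> R - dist y x0" by (rule infdist_sphere_le[OF R(1) y yne])
      also have "\<dots> < d" using dy d' by (simp add: r_def)
      finally have "v y > w xM" using d y by blast
      moreover have "w y \<le> w xM" using xM y by auto
      moreover have "(1/c) * w y \<le> w y" using c1 wpos[OF yb'] by (simp add: field_simps)
      ultimately show ?thesis by linarith
    qed
  qed
  have eq: "v xm = (1/c) * w xm" using vpos[OF xmb] c1 by (simp add: c_def)
  show False
    by (rule no_touch_below[where c="1/c", OF N S C R'0 _ _ blowD(3)[OF v] open_ball cb[THEN subset_trans[OF ball_subset_cball]] order_refl xmb])
       (use c1 eq le in \<open>auto simp: w_def\<close>)
qed




lemma u_in_cont_R:
  fixes x0 :: "real^'n::finite"
  assumes "dist x x0 < R" "R > 0"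
  shows "((\<lambda>R'. u_in a R' x0 x) \<longlongrightarrow> u_in a R x0 x) (at R)"
proof -
  have D: "R^2 - (dist x x0)^2 > 0"
    using assms by (simp add: power_strict_mono)
  have "((\<lambda>R'. R' / (R'^2 - (dist x x0)^2)) \<longlongrightarrow> R / (R^2 - (dist x x0)^2)) (at R)"
    using D by (intro tendsto_intros) auto
  moreover have "R / (R^2 - (dist x x0)^2) \<noteq> 0" using D assms by simp
  ultimately have "((\<lambda>R'. a * (R' / (R'^2 - (dist x x0)^2)) powr ((real CARD('n) - 2) / 2))
      \<longlongrightarrow> a * (R / (R^2 - (dist x x0)^2)) powr ((real CARD('n) - 2) / 2)) (at R)"
    by (intro tendsto_intros) auto
  thus ?thesis by (simp add: u_in_def[abs_def])
qed

theorem lemma2p3: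
  fixes f :: "real^'n::finite \<Rightarrow> real" and \<Gamma> :: "(real^'n) set"
    and a R :: real and x0 :: "real^'n"
  assumes "CARD('n) \<ge> 3"
    and "structural f \<Gamma>"
    and "canonical_const f \<Gamma> a"
    and "R > 0"
  shows "blowup_sol f \<Gamma> R x0 (u_in a R x0) \<and>
         (\<forall>v. blowup_sol f \<Gamma> R x0 v \<longrightarrow> (\<forall>x\<in>ball x0 R. v x = u_in a R x0 x))"
proof (intro conjI allI impI ballI)
  note N = assms(1) and S = assms(2) and C = assms(3) and R = assms(4)
  show "blowup_sol f \<Gamma> R x0 (u_in a R x0)" by (rule partA[OF N S C R])
  fix v x assume v: "blowup_sol f \<Gamma> R x0 v" and x: "x \<in> ball x0 R"
  have dx: "dist x x0 < R" "dist x0 x < R" using x by (auto simp: dist_commute)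
  have lim: "((\<lambda>R'. u_in a R' x0 x) \<longlongrightarrow> u_in a R x0 x) (at R)" by (rule u_in_cont_R[OF dx(1) R])
  have le1: "v x \<le> u_in a R x0 x"
  proof (rule tendsto_lowerbound)
    show "((\<lambda>R'. u_in a R' x0 x) \<longlongrightarrow> u_in a R x0 x) (at_left R)"
      by (rule tendsto_mono[OF at_within_le_at lim])
    have "eventually (\<lambda>R'. R' \<in> {dist x0 x<..<R}) (at_left R)"
      by (rule eventually_at_left_real[OF dx(2)])
    thus "eventually (\<lambda>R'. v x \<le> u_in a R' x0 x) (at_left R)"
    proof (rule eventually_mono)
      fix R' assume "R' \<in> {dist x0 x<..<R}"
      hence h: "R' < R" "dist x0 x < R'" by auto
      have "R' > 0" using h(2) zero_le_dist[of x0 x] by linarith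
      from this h show "v x \<le> u_in a R' x0 x" by (rule upper_R'[OF N S C _ _ _ v])
    qed
  qed simp
  have le2: "u_in a R x0 x \<le> v x"
  proof (rule tendsto_upperbound)
    show "((\<lambda>R'. u_in a R' x0 x) \<longlongrightarrow> u_in a R x0 x) (at_right R)"
      by (rule tendsto_mono[OF at_within_le_at lim])
    have "eventually (\<lambda>R'. R' \<in> {R<..<R+1}) (at_right R)"
      by (rule eventually_at_right_real) simp
    thus "eventually (\<lambda>R'. u_in a R' x0 x \<le> v x) (at_right R)"
    proof (rule eventually_mono)
      fix R' assume "R' \<in> {R<..<R+1}"
      hence "R < R'" by auto
      thus "u_in a R' x0 x \<le> v x" by (rule lower_R'[OF N S C R _ x v])
    qed
  qed simp
  show "v x = u_in a R x0 x" using le1 le2 by simp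
qed


end
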